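(* Let $\epsilon\in(0,1)$, $h>0$, $u_0\in\mathbb{R}$, and let $(u_n)_{n\ge0}$ be generated by the explicit Euler scheme $$\frac{u_n-u_{n-1}}{h}+\frac{1}{\epsilon^2}\big(u_{n-1}^3-u_{n-1}\big)=0,\qquad n\ge 1.$$ (i) If $u_0\in\{0,1,-1\}$, then $u_n=\mathrm{sign}(u_0)$ for all $n\ge1$, for any $h>0$ and any $\epsilon$. (ii) If $u_0\notin\{0,1,-1\}$, define $h^*=h^*(u_0,\epsilon)=\frac{\epsilon^2}{u_0^2+|u_0|}$ if $|u_0|>1$ and $h^*=\frac{\epsilon^2}{2}$ if $0<|u_0|<1$. Then $h^*>0$, and for every $h\in(0,h^*]$ the sequence $(u_n)$ is monotone and converges to $\mathrm{sign}(u_0)$ as $n\to\infty$.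
   Context: The scheme discretizes the ODE $u'(t)+\frac{1}{\epsilon^2}(u^3-u)=0$, $u(0)=u_0$. Here $\mathrm{sign}(0)=0$, $\mathrm{sign}(x)=1$ for $x>0$, $\mathrm{sign}(x)=-1$ for $x<0$. *)

theory Defs
  imports Complex_Main
begin

fun euler_AC :: "real \<Rightarrow> real \<Rightarrow> real \<Rightarrow> nat \<Rightarrow> real" where
  "euler_AC h eps u0 0 = u0"
| "euler_AC h eps u0 (Suc n) =
     euler_AC h eps u0 n - h / eps^2 * ((euler_AC h eps u0 n)^3 - euler_AC h eps u0 n)"

definition hstar :: "real \<Rightarrow> real \<Rightarrow> real" where
  "hstar u0 eps = (if \<bar>u0\<bar> > 1 then eps^2 / (u0^2 + \<bar>u0\<bar>) else eps^2 / 2)"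

end

theory Submission
  imports Defs
begin

lemma euler_neg: "euler_AC h eps (-u0) n = - euler_AC h eps u0 n"
  by (induction n) (auto simp: algebra_simps power3_eq_cube)

lemma euler_fix:
  assumes "u0 \<in> {0, 1, -1}" shows "euler_AC h eps u0 n = u0"
  using assms by (induction n) (auto simp: power3_eq_cube)

lemma limit_fix:
  assumes lim: "euler_AC h eps u0 \<longlonglongrightarrow> L" and k: "h / eps^2 \<noteq> 0"
  shows "L^3 = L"
proof -
  have "(\<lambda>n. euler_AC h eps u0 (Suc n)) \<longlonglongrightarrow> L"
    using lim by (rule LIMSEQ_Suc)
  moreover have "(\<lambda>n. euler_AC h eps u0 (Suc n)) \<longlonglongrightarrow> L - h / eps^2 * (L^3 - L)"
    unfolding euler_AC.simps by (intro tendsto_intros lim)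
  ultimately have "L = L - h / eps^2 * (L^3 - L)" by (rule LIMSEQ_unique)
  with k show ?thesis by simp
qed

lemma cube_cases: "(L::real)^3 = L \<Longrightarrow> L = 0 \<or> L = 1 \<or> L = -1"
proof -
  assume "L^3 = L"
  hence "L * (L - 1) * (L + 1) = 0" by (simp add: algebra_simps power3_eq_cube)
  thus ?thesis by auto
qed

lemma small_step:
  fixes k u :: real
  assumes k: "0 < k" "k \<le> 1/2" and a: "0 < u" "u < 1"
  shows "u \<le> u - k * (u^3 - u) \<and> 0 < u - k * (u^3 - u) \<and> u - k * (u^3 - u) < 1"
proof -
  have p1: "k * (u * (1 - u) * (1 + u)) \<ge> 0" using a k(1) by (intro mult_nonneg_nonneg) auto
  have "u * u \<le> u * 1" using a by (intro mult_left_mono) auto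
  moreover have "u * (1 + u) = u + u * u" by (simp add: algebra_simps)
  ultimately have l2: "u * (1 + u) < 2" using a by linarith
  hence "k * (u * (1 + u)) \<le> (1/2) * (u * (1 + u))" using a k(2)
    by (intro mult_right_mono) auto
  hence "k * (u * (1 + u)) < 1" using l2 by linarith
  hence p2: "(1 - u) * (1 - k * (u * (1 + u))) > 0" using a by simp
  have e1: "u - k * (u^3 - u) - u = k * (u * (1 - u) * (1 + u))" by (simp add: algebra_simps power3_eq_cube)
  have e2: "1 - (u - k * (u^3 - u)) = (1 - u) * (1 - k * (u * (1 + u)))" by (simp add: algebra_simps power3_eq_cube)
  show ?thesis using p1 p2 e1 e2 a by linarith
qed

lemma small_case:
  fixes k :: real
  assumes u0: "0 < u0" "u0 < 1" and k: "h / eps^2 = k" "0 < k" "k \<le> 1/2"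
  shows "0 < euler_AC h eps u0 n \<and> euler_AC h eps u0 n < 1 \<and>
         euler_AC h eps u0 n \<le> euler_AC h eps u0 (Suc n)"
proof -
  have "0 < euler_AC h eps u0 n \<and> euler_AC h eps u0 n < 1"
  proof (induction n)
    case 0 then show ?case using u0 by simp
  next
    case (Suc n) then show ?case
      using small_step[OF k(2,3), of "euler_AC h eps u0 n"] k(1) by simp
  qed
  thus ?thesis using small_step[OF k(2,3), of "euler_AC h eps u0 n"] k(1) by simp
qed

lemma big_case:
  fixes k :: real
  assumes u0: "1 < u0" and k: "h / eps^2 = k" "0 < k" "k * (u0^2 + u0) \<le> 1"
  shows "1 \<le> euler_AC h eps u0 n \<and> euler_AC h eps u0 n \<le> u0 \<and>
         euler_AC h eps u0 (Suc n) \<le> euler_AC h eps u0 n"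
proof -
  have step: "1 \<le> u \<Longrightarrow> u \<le> u0 \<Longrightarrow> u - k * (u^3 - u) \<le> u \<and> 1 \<le> u - k * (u^3 - u)" for u :: real
  proof -
    assume a: "1 \<le> u" "u \<le> u0"
    have "k * (u * (u - 1) * (1 + u)) \<ge> 0" using a k(2) by (intro mult_nonneg_nonneg) auto
    moreover have "k * (u * (1 + u)) \<le> 1"
    proof -
      have "u * (1 + u) \<le> u0 * (1 + u0)" using a
        by (intro mult_mono) auto
      hence "k * (u * (1 + u)) \<le> k * (u0 * (1 + u0))" using k(2)
        by (intro mult_left_mono) auto
      also have "\<dots> \<le> 1" using k(3) by (simp add: algebra_simps power2_eq_square)
      finally show ?thesis .
    qed
    hence "(u - 1) * (1 - k * (u * (1 + u))) \<ge> 0" using a by simp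
    ultimately show ?thesis by (simp add: algebra_simps power3_eq_cube)
  qed
  have "1 \<le> euler_AC h eps u0 n \<and> euler_AC h eps u0 n \<le> u0"
  proof (induction n)
    case 0 then show ?case using u0 by simp
  next
    case (Suc n) then show ?case using step[of "euler_AC h eps u0 n"] k by auto
  qed
  thus ?thesis using step[of "euler_AC h eps u0 n"] k by auto
qed

lemma pos_case:
  fixes eps u0 h :: real
  assumes e: "0 < eps" and u0: "0 < u0" "u0 \<noteq> 1" and h: "0 < h" "h \<le> hstar u0 eps"
  shows "(mono (euler_AC h eps u0) \<or> antimono (euler_AC h eps u0)) \<and>
         euler_AC h eps u0 \<longlonglongrightarrow> 1"
proof -
  define k where "k = h / eps^2"
  have kp: "0 < k" using e h unfolding k_def by simp
  have k0: "h / eps^2 \<noteq> 0" using e h by simp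
  show ?thesis
  proof (cases "u0 < 1")
    case True
    have "h \<le> eps^2 / 2" using h True u0 by (simp add: hstar_def)
    hence kk: "k \<le> 1/2" using e unfolding k_def by (simp add: divide_simps)
    note sc = small_case[OF u0(1) True k_def[symmetric] kp kk]
    have inc: "incseq (euler_AC h eps u0)" using sc by (intro incseq_SucI) blast
    obtain L where L: "euler_AC h eps u0 \<longlonglongrightarrow> L" "\<forall>i. euler_AC h eps u0 i \<le> L"
    proof (rule incseq_convergent[OF inc, of 1])
      show "\<forall>i. euler_AC h eps u0 i \<le> 1" using sc less_imp_le by blast
    qed
    have "L^3 = L" by (rule limit_fix[OF L(1) k0])
    moreover have "u0 \<le> L" using L(2)[rule_format, of 0] by simp
    ultimately have "L = 1" using u0 cube_cases by force
    thus ?thesis using L inc by simp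
  next
    case False
    hence g: "1 < u0" using u0 by simp
    have "h \<le> eps^2 / (u0^2 + u0)" using h g by (simp add: hstar_def)
    moreover have "0 < u0^2 + u0" using g by (intro add_pos_pos) auto
    ultimately have kk: "k * (u0^2 + u0) \<le> 1" using e unfolding k_def by (simp add: divide_simps)
    note bc = big_case[OF g k_def[symmetric] kp kk]
    have dec: "decseq (euler_AC h eps u0)" using bc by (intro decseq_SucI) blast
    obtain L where L: "euler_AC h eps u0 \<longlonglongrightarrow> L" "\<forall>i. L \<le> euler_AC h eps u0 i"
    proof (rule decseq_convergent[OF dec, of 1])
      show "\<forall>i. 1 \<le> euler_AC h eps u0 i" using bc by blast
    qed
    have "L^3 = L" by (rule limit_fix[OF L(1) k0])
    moreover have "1 \<le> L"
      by (rule LIMSEQ_le_const[OF L(1)]) (use bc in blast)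
    ultimately have "L = 1" using cube_cases by force
    thus ?thesis using L dec by simp
  qed
qed

theorem theorem2p2:
  fixes eps u0 :: real
  assumes "0 < eps" and "eps < 1"
  shows "(u0 \<in> {0, 1, -1} \<longrightarrow>
            (\<forall>h > 0. \<forall>n \<ge> 1. euler_AC h eps u0 n = sgn u0))
       \<and> (u0 \<notin> {0, 1, -1} \<longrightarrow>
            hstar u0 eps > 0 \<and>
            (\<forall>h. 0 < h \<and> h \<le> hstar u0 eps \<longrightarrow>
               (mono (euler_AC h eps u0) \<or> antimono (euler_AC h eps u0)) \<and>
               euler_AC h eps u0 \<longlonglongrightarrow> sgn u0))"
proof (intro conjI impI)
  assume a: "u0 \<in> {0, 1, -1}"
  show "\<forall>h > 0. \<forall>n \<ge> 1. euler_AC h eps u0 n = sgn u0"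
  proof (intro allI impI)
    fix h :: real and n :: nat
    have "euler_AC h eps u0 n = u0" by (rule euler_fix[OF a])
    moreover have "sgn u0 = u0" using a by auto
    ultimately show "euler_AC h eps u0 n = sgn u0" by simp
  qed
next
  assume "u0 \<notin> {0, 1, -1}"
  hence "u0 \<noteq> 0" by simp
  hence "0 < u0^2 + \<bar>u0\<bar>" by (simp add: add_pos_nonneg)
  thus "hstar u0 eps > 0" using assms by (simp add: hstar_def)
next
  show "\<forall>h. 0 < h \<and> h \<le> hstar u0 eps \<longrightarrow>
               (mono (euler_AC h eps u0) \<or> antimono (euler_AC h eps u0)) \<and>
               euler_AC h eps u0 \<longlonglongrightarrow> sgn u0" if nz: "u0 \<notin> {0, 1, -1}"
  proof (intro allI impI)
  fix h :: real
  assume h: "0 < h \<and> h \<le> hstar u0 eps"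
  have n1: "u0 \<noteq> 1" "u0 \<noteq> -1" "u0 \<noteq> 0" using nz by auto
  show "(mono (euler_AC h eps u0) \<or> antimono (euler_AC h eps u0)) \<and>
               euler_AC h eps u0 \<longlonglongrightarrow> sgn u0"
  proof (cases "0 < u0")
    case True
    have "sgn u0 = 1" using True by simp
    thus ?thesis using pos_case[OF assms(1) True n1(1) conjunct1[OF h] conjunct2[OF h]] by simp
  next
    case False
    hence p: "0 < - u0" using n1 by simp
    have n2: "- u0 \<noteq> 1" using n1 by simp
    have "hstar (- u0) eps = hstar u0 eps" by (simp add: hstar_def)
    hence hs: "h \<le> hstar (- u0) eps" using h by simp
    have r: "(mono (euler_AC h eps (-u0)) \<or> antimono (euler_AC h eps (-u0))) \<and>
         euler_AC h eps (-u0) \<longlonglongrightarrow> 1"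
      using pos_case[OF assms(1) p n2 conjunct1[OF h] hs] .
    have f: "euler_AC h eps (-u0) = (\<lambda>n. - euler_AC h eps u0 n)" by (rule ext) (simp add: euler_neg)
    have mm: "mono (\<lambda>n. - X n) \<Longrightarrow> antimono X" "antimono (\<lambda>n. - X n) \<Longrightarrow> mono X" for X :: "nat \<Rightarrow> real"
      by (auto simp: mono_def antimono_def)
    have m: "mono (euler_AC h eps u0) \<or> antimono (euler_AC h eps u0)"
      using r mm unfolding f by blast
    have "(\<lambda>n. - euler_AC h eps u0 n) \<longlonglongrightarrow> 1" using r unfolding f by simp
    hence "(\<lambda>n. - (- euler_AC h eps u0 n)) \<longlonglongrightarrow> - 1"
      by (rule tendsto_minus)
    moreover have "sgn u0 = -1" using False n1 by simp
    ultimately show ?thesis using m by simp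
  qed
  qed
qed

end
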